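(* Let $\mathbf{X}=\mathbf{Y}=\mathbf{Z}=\{0,1\}$, $N\ge1$ fixed, and let $(X_n,Y_n,Z_n)$, $n=1,\dots,N$, be random elements of $\{0,1\}^3$ on a common probability space. Suppose there are a probability distribution $\pi$ on $\{0,1\}$ and probability distributions $q(\cdot\mid x,z)$ on $\{0,1\}$, $(x,z)\in\{0,1\}^2$, such that for every $n\in[N]$, writing $\mathcal{H}_{n-1}:=\sigma\bigl((X_i,Y_i,Z_i):i<n\bigr)$: (i) conditionally on $\mathcal{H}_{n-1}$, $Z_n$ has distribution $\pi$; (ii) the conditional distribution of $X_n$ given $\mathcal{H}_{n-1}$ and $Z_n$ is arbitrary; (iii) conditionally on $\sigma(\mathcal{H}_{n-1},Z_n,X_n)$, $Y_n$ has distribution $q(\cdot\mid X_n,Z_n)$. Fix $\delta>0$ and $\tilde x\in\{0,1\}$, and let $Y$ be a further random variable on the same space with $\mathbb{P}(Y=y)=\sum_{z\in\{0,1\}}q(y\mid\tilde x,z)\pi(z)$ for $y\in\{0,1\}$. Define \[ \Gamma:=\Bigl\{y\in\{0,1\}:\ \sum_{z\in\{0,1\}}\hat p(z)\,\check p(y\mid\tilde x,z)+2\sqrt{\frac{\ln\frac{12}{\delta}}{2N}}+\sum_{z\in\{0,1\}}\sqrt{\frac{2\ln\log_2\lfloor\!\lfloor\#\tilde x z\rfloor\!\rfloor+\ln\frac{20}{\delta}}{2\lfloor\!\lfloor\#\tilde x z\rfloor\!\rfloor}}>\frac{\delta}{2}\Bigr\}, \] with the convention $\ln\log_2 1:=\infty$.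 Then $\Gamma$ is a $(1-\delta)$-prediction set for $Y$, i.e. $\mathbb{P}(Y\notin\Gamma)\le\delta$.
   Context: Notation: for $m\le N$, $\#_m\tilde x z:=|\{n\in[m]:(X_n,Z_n)=(\tilde x,z)\}|$, $\#\tilde x z:=\#_N\tilde x z$, $\#z:=|\{n\in[N]:Z_n=z\}|$, $\hat p(z):=\#z/N$. For an integer $n\ge2$, $\lfloor\!\lfloor n\rfloor\!\rfloor$ is the largest $2^k$, $k\in\{1,2,\dots\}$, with $2^k\le n$; for $n<2$, $\lfloor\!\lfloor n\rfloor\!\rfloor:=1$. The estimate $\check p(y\mid\tilde x,z):=|\{n\in[N]:\#_n\tilde x z\le\lfloor\!\lfloor\#\tilde x z\rfloor\!\rfloor,\ X_n=\tilde x,\ Y_n=y,\ Z_n=z\}|/\lfloor\!\lfloor\#\tilde x z\rfloor\!\rfloor$ is the fraction of the first $\lfloor\!\lfloor\#\tilde x z\rfloor\!\rfloor$ observations with $(X_n,Z_n)=(\tilde x,z)$ for which $Y_n=y$ (its value is irrelevant when the corresponding term is infinite). The setting is the strong (adaptive) interpretation of the causal diagram $Z\to X$, $Z\to Y$, $X\to Y$, and $Y$'s distribution is the causal effect of setting $X=\tilde x$. *)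

theory Defs
  imports "HOL-Probability.Probability"
begin

text \<open>The binary alphabet {0,1} is represented by bool (False = 0, True = 1).\<close>

definition floor2 :: "nat \<Rightarrow> nat" where
  "floor2 n = (if n < 2 then 1 else (GREATEST m. \<exists>k\<ge>1. m = 2 ^ k \<and> m \<le> n))"

definition cnt :: "(nat \<Rightarrow> 'a \<Rightarrow> bool) \<Rightarrow> (nat \<Rightarrow> 'a \<Rightarrow> bool) \<Rightarrow> nat \<Rightarrow> bool \<Rightarrow> bool \<Rightarrow> 'a \<Rightarrow> nat" where
  "cnt X Z m x z \<omega> = card {n \<in> {1..m}. X n \<omega> = x \<and> Z n \<omega> = z}"

definition phat :: "(nat \<Rightarrow> 'a \<Rightarrow> bool) \<Rightarrow> nat \<Rightarrow> bool \<Rightarrow> 'a \<Rightarrow> real" where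
  "phat Z N z \<omega> = real (card {n \<in> {1..N}. Z n \<omega> = z}) / real N"

definition pcheck :: "(nat \<Rightarrow> 'a \<Rightarrow> bool) \<Rightarrow> (nat \<Rightarrow> 'a \<Rightarrow> bool) \<Rightarrow> (nat \<Rightarrow> 'a \<Rightarrow> bool)
    \<Rightarrow> nat \<Rightarrow> bool \<Rightarrow> bool \<Rightarrow> bool \<Rightarrow> 'a \<Rightarrow> real" where
  "pcheck X Y Z N y x z \<omega> =
     real (card {n \<in> {1..N}. cnt X Z n x z \<omega> \<le> floor2 (cnt X Z N x z \<omega>)
                   \<and> X n \<omega> = x \<and> Y n \<omega> = y \<and> Z n \<omega> = z})
     / real (floor2 (cnt X Z N x z \<omega>))"

text \<open>The per-stratum width term, with the convention ln log_2 1 = \<infinity>.\<close>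
definition width :: "nat \<Rightarrow> real \<Rightarrow> ereal" where
  "width c \<delta> = (if floor2 c < 2 then \<infinity>
     else ereal (sqrt ((2 * ln (log 2 (real (floor2 c))) + ln (20 / \<delta>)) / (2 * real (floor2 c)))))"

definition Gamma :: "(nat \<Rightarrow> 'a \<Rightarrow> bool) \<Rightarrow> (nat \<Rightarrow> 'a \<Rightarrow> bool) \<Rightarrow> (nat \<Rightarrow> 'a \<Rightarrow> bool)
    \<Rightarrow> nat \<Rightarrow> real \<Rightarrow> bool \<Rightarrow> 'a \<Rightarrow> bool set" where
  "Gamma X Y Z N \<delta> xt \<omega> = {y.
     ereal ((\<Sum>z\<in>UNIV. phat Z N z \<omega> * pcheck X Y Z N y xt z \<omega>)
            + 2 * sqrt (ln (12 / \<delta>) / (2 * real N)))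
     + (\<Sum>z\<in>UNIV. width (cnt X Z N xt z \<omega>) \<delta>) > ereal (\<delta> / 2)}"

text \<open>History event: (X_i, Y_i, Z_i) = h i for all i with 1 \<le> i < n.
  Events of this form (over all h) generate H_{n-1}, which is a finite sigma-algebra.\<close>
definition hist_event :: "'a measure \<Rightarrow> (nat \<Rightarrow> 'a \<Rightarrow> bool) \<Rightarrow> (nat \<Rightarrow> 'a \<Rightarrow> bool) \<Rightarrow> (nat \<Rightarrow> 'a \<Rightarrow> bool)
    \<Rightarrow> nat \<Rightarrow> (nat \<Rightarrow> bool \<times> bool \<times> bool) \<Rightarrow> 'a set" where
  "hist_event M X Y Z n h = {\<omega> \<in> space M. \<forall>i\<in>{1..<n}. (X i \<omega>, Y i \<omega>, Z i \<omega>) = h i}"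

end

theory Submission
  imports Defs "HOL-Probability.Hoeffding"
begin


type_synonym trip3 = "bool \<times> bool \<times> bool"

fun obs :: "(nat \<Rightarrow> 'a \<Rightarrow> bool) \<Rightarrow> (nat \<Rightarrow> 'a \<Rightarrow> bool) \<Rightarrow> (nat \<Rightarrow> 'a \<Rightarrow> bool) \<Rightarrow> nat \<Rightarrow> 'a \<Rightarrow> trip3 list" where
  "obs X Y Z 0 w = []"
| "obs X Y Z (Suc k) w = (X (Suc k) w, Y (Suc k) w, Z (Suc k) w) # obs X Y Z k w"

lemma length_obs[simp]: "length (obs X Y Z k w) = k"
  by (induction k) auto

lemma nth_obs: "j < k \<Longrightarrow> obs X Y Z k w ! j = (X (k - j) w, Y (k - j) w, Z (k - j) w)"
proof (induction k arbitrary: j)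
  case 0 then show ?case by simp
next
  case (Suc k)
  then show ?case by (cases j) auto
qed

definition LS :: "nat \<Rightarrow> trip3 list set" where
  "LS k = {xs. set xs \<subseteq> UNIV \<and> length xs = k}"

lemma finite_LS[simp]: "finite (LS k)"
  unfolding LS_def by (rule finite_lists_length_eq) simp

lemma LS_Suc: "LS (Suc k) = (\<lambda>(xs, t). t # xs) ` (LS k \<times> UNIV)"
  unfolding LS_def by (rule lists_length_Suc_eq)

lemma LS_0: "LS 0 = {[]}" unfolding LS_def by auto

lemma sum_LS_Suc: "(\<Sum>hs\<in>LS (Suc k). f hs) = (\<Sum>hs\<in>LS k. \<Sum>t\<in>UNIV. f (t # hs))"
proof -
  have inj: "inj_on (\<lambda>(xs, t). t # xs) (LS k \<times> (UNIV::trip3 set))"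
    by (auto simp: inj_on_def)
  have "(\<Sum>hs\<in>LS (Suc k). f hs) = (\<Sum>p\<in>LS k \<times> UNIV. f ((\<lambda>(xs, t). t # xs) p))"
    unfolding LS_Suc by (subst sum.reindex[OF inj]) (simp add: comp_def)
  also have "\<dots> = (\<Sum>hs\<in>LS k. \<Sum>t\<in>UNIV. f (t # hs))"
    by (simp add: sum.cartesian_product split_beta)
  finally show ?thesis .
qed

definition EV :: "'a measure \<Rightarrow> (nat \<Rightarrow> 'a \<Rightarrow> bool) \<Rightarrow> (nat \<Rightarrow> 'a \<Rightarrow> bool) \<Rightarrow> (nat \<Rightarrow> 'a \<Rightarrow> bool) \<Rightarrow> trip3 list \<Rightarrow> 'a set" where
  "EV M X Y Z hs = {w \<in> space M. obs X Y Z (length hs) w = hs}"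

lemma EV_Nil: "EV M X Y Z [] = space M" by (simp add: EV_def)

lemma EV_Cons: "EV M X Y Z (t # hs) = EV M X Y Z hs \<inter> {w. (X (Suc (length hs)) w, Y (Suc (length hs)) w, Z (Suc (length hs)) w) = t}"
  by (auto simp: EV_def)

locale obsmodel = prob_space M for M :: "'a measure" +
  fixes X Y Z :: "nat \<Rightarrow> 'a \<Rightarrow> bool" and N :: nat
  assumes meas: "\<And>n. n \<in> {1..N} \<Longrightarrow>
          X n \<in> measurable M (count_space UNIV) \<and>
          Y n \<in> measurable M (count_space UNIV) \<and>
          Z n \<in> measurable M (count_space UNIV)"
begin

lemma trip_sets: assumes "n \<in> {1..N}" shows "{w \<in> space M. (X n w, Y n w, Z n w) \<in> T} \<in> sets M"
proof -
  have [measurable]: "X n \<in> measurable M (count_space UNIV)" "Y n \<in> measurable M (count_space UNIV)"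
     "Z n \<in> measurable M (count_space UNIV)" using meas[OF assms] by auto
  have eq: "{w \<in> space M. (X n w, Y n w, Z n w) \<in> T} = (\<Union>t\<in>T. {w \<in> space M. X n w = fst t} \<inter> {w \<in> space M. Y n w = fst (snd t)} \<inter> {w \<in> space M. Z n w = snd (snd t)})"
    by auto
  have "finite T" by simp
  show ?thesis unfolding eq by (intro sets.finite_UN \<open>finite T\<close> sets.Int; measurable)
qed

lemma EV_sets: "length hs \<le> N \<Longrightarrow> EV M X Y Z hs \<in> sets M"
proof (induction hs)
  case Nil then show ?case by (simp add: EV_Nil)
next
  case (Cons t hs)
  have "EV M X Y Z (t # hs) = EV M X Y Z hs \<inter> {w \<in> space M. (X (Suc (length hs)) w, Y (Suc (length hs)) w, Z (Suc (length hs)) w) \<in> {t}}"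
    unfolding EV_Cons using Cons by (auto simp: EV_def)
  then show ?case using Cons trip_sets[of "Suc (length hs)" "{t}"] by auto
qed

lemma sum_EV_Cons: assumes "length hs < N"
  shows "(\<Sum>t\<in>T. measure M (EV M X Y Z (t # hs))) = measure M (EV M X Y Z hs \<inter> {w. (X (Suc (length hs)) w, Y (Suc (length hs)) w, Z (Suc (length hs)) w) \<in> T})"
proof -
  have "measure M (\<Union>t\<in>T. EV M X Y Z (t # hs)) = (\<Sum>t\<in>T. measure M (EV M X Y Z (t # hs)))"
  proof (intro finite_measure_finite_Union)
    show "(\<lambda>t. EV M X Y Z (t # hs)) ` T \<subseteq> sets M" using assms by (auto intro!: EV_sets)
    show "disjoint_family_on (\<lambda>t. EV M X Y Z (t # hs)) T" by (auto simp: disjoint_family_on_def EV_Cons)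
  qed simp
  moreover have "(\<Union>t\<in>T. EV M X Y Z (t # hs)) = EV M X Y Z hs \<inter> {w. (X (Suc (length hs)) w, Y (Suc (length hs)) w, Z (Suc (length hs)) w) \<in> T}"
    by (auto simp: EV_Cons)
  ultimately show ?thesis by simp
qed

lemma sum_EV_Cons_UNIV: assumes "length hs < N"
  shows "(\<Sum>t\<in>UNIV. measure M (EV M X Y Z (t # hs))) = measure M (EV M X Y Z hs)"
  using sum_EV_Cons[OF assms, of UNIV] by simp

lemma measure_obs_in: assumes "S \<subseteq> LS N"
  shows "measure M {w \<in> space M. obs X Y Z N w \<in> S} = (\<Sum>hs\<in>S. measure M (EV M X Y Z hs))"
proof -
  have fin: "finite S" by (rule finite_subset[OF assms finite_LS])
  have len: "hs \<in> S \<Longrightarrow> length hs = N" for hs using assms by (auto simp: LS_def)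
  have "{w \<in> space M. obs X Y Z N w \<in> S} = (\<Union>hs\<in>S. EV M X Y Z hs)"
    using len by (auto simp: EV_def)
  moreover have "measure M (\<Union>hs\<in>S. EV M X Y Z hs) = (\<Sum>hs\<in>S. measure M (EV M X Y Z hs))"
  proof (rule finite_measure_finite_Union)
    show "finite S" by (fact fin)
    show "EV M X Y Z ` S \<subseteq> sets M"
    proof
      fix A assume "A \<in> EV M X Y Z ` S"
      then obtain hs where "hs \<in> S" "A = EV M X Y Z hs" by blast
      then show "A \<in> sets M" using len[of hs] EV_sets[of hs] by simp
    qed
    show "disjoint_family_on (EV M X Y Z) S"
      unfolding disjoint_family_on_def
    proof (intro ballI impI)
      fix a b assume ab: "a \<in> S" "b \<in> S" "a \<noteq> b"
      show "EV M X Y Z a \<inter> EV M X Y Z b = {}"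
        using ab len[of a] len[of b] unfolding EV_def by auto
    qed
  qed
  ultimately show ?thesis by simp
qed

lemma obs_in_sets: assumes "S \<subseteq> LS N"
  shows "{w \<in> space M. obs X Y Z N w \<in> S} \<in> sets M"
proof -
  have fin: "finite S" by (rule finite_subset[OF assms finite_LS])
  have len: "hs \<in> S \<Longrightarrow> length hs = N" for hs using assms by (auto simp: LS_def)
  have "{w \<in> space M. obs X Y Z N w \<in> S} = (\<Union>hs\<in>S. EV M X Y Z hs)"
    using len by (auto simp: EV_def)
  moreover have "(\<Union>hs\<in>S. EV M X Y Z hs) \<in> sets M"
  proof (rule sets.finite_UN[OF fin])
    fix hs assume "hs \<in> S"
    then show "EV M X Y Z hs \<in> sets M" using len[of hs] EV_sets[of hs] by simp
  qed
  ultimately show ?thesis by simp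
qed

lemma EV_hist: assumes "length hs < N"
  shows "EV M X Y Z hs = hist_event M X Y Z (Suc (length hs)) (\<lambda>i. hs ! (length hs - i))"
proof -
  let ?k = "length hs"
  have "obs X Y Z ?k w = hs \<longleftrightarrow> (\<forall>i\<in>{1..<Suc ?k}. (X i w, Y i w, Z i w) = hs ! (?k - i))" for w
  proof
    assume h: "obs X Y Z ?k w = hs"
    show "\<forall>i\<in>{1..<Suc ?k}. (X i w, Y i w, Z i w) = hs ! (?k - i)"
    proof
      fix i assume "i \<in> {1..<Suc ?k}"
      then have "?k - i < ?k" "?k - (?k - i) = i" by auto
      then show "(X i w, Y i w, Z i w) = hs ! (?k - i)" using nth_obs[of "?k - i" ?k X Y Z w] h by simp
    qed
  next
    assume h: "\<forall>i\<in>{1..<Suc ?k}. (X i w, Y i w, Z i w) = hs ! (?k - i)"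
    show "obs X Y Z ?k w = hs"
    proof (rule nth_equalityI)
      fix j assume "j < length (obs X Y Z ?k w)"
      then have j: "j < ?k" by simp
      then have "?k - j \<in> {1..<Suc ?k}" "?k - (?k - j) = j" by auto
      then show "obs X Y Z ?k w ! j = hs ! j" using nth_obs[OF j] h by metis
    qed simp
  qed
  then show ?thesis by (auto simp: EV_def hist_event_def)
qed

end


fun nsel :: "(trip3 list \<Rightarrow> trip3 \<Rightarrow> bool) \<Rightarrow> trip3 list \<Rightarrow> nat" where
  "nsel sel [] = 0"
| "nsel sel (t # hs) = nsel sel hs + (if sel hs t then 1 else 0)"

fun nsuc :: "(trip3 list \<Rightarrow> trip3 \<Rightarrow> bool) \<Rightarrow> (trip3 \<Rightarrow> bool) \<Rightarrow> trip3 list \<Rightarrow> nat" where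
  "nsuc sel ind [] = 0"
| "nsuc sel ind (t # hs) = nsuc sel ind hs + (if sel hs t \<and> ind t then 1 else 0)"

definition phi :: "(trip3 list \<Rightarrow> trip3 \<Rightarrow> bool) \<Rightarrow> (trip3 \<Rightarrow> bool) \<Rightarrow> real \<Rightarrow> real \<Rightarrow> trip3 list \<Rightarrow> trip3 \<Rightarrow> real" where
  "phi sel ind p l hs t = (if sel hs t then exp (l * (p - (if ind t then 1 else 0)) - l\<^sup>2 / 8) else 1)"

fun prodW :: "(trip3 list \<Rightarrow> trip3 \<Rightarrow> bool) \<Rightarrow> (trip3 \<Rightarrow> bool) \<Rightarrow> real \<Rightarrow> real \<Rightarrow> trip3 list \<Rightarrow> real" where
  "prodW sel ind p l [] = 1"
| "prodW sel ind p l (t # hs) = prodW sel ind p l hs * phi sel ind p l hs t"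

lemma prodW_eq: fixes p l :: real
  shows "prodW sel ind p l hs = exp (l * (p * real (nsel sel hs) - real (nsuc sel ind hs)) - real (nsel sel hs) * l\<^sup>2 / 8)"
proof (induction hs)
  case Nil then show ?case by simp
next
  case (Cons t hs)
  show ?case
  proof (cases "sel hs t")
    case True
    define a where "a = real (nsel sel hs)"
    define b where "b = real (nsuc sel ind hs)"
    define i where "i = (if ind t then 1 else 0 :: real)"
    have "prodW sel ind p l (t # hs) = exp (l * (p * a - b) - a * l\<^sup>2 / 8) * exp (l * (p - i) - l\<^sup>2 / 8)"
      using True by (simp add: Cons phi_def a_def b_def i_def)
    also have "\<dots> = exp (l * (p * (a + 1) - (b + i)) - (a + 1) * l\<^sup>2 / 8)"
      unfolding exp_add[symmetric] by (rule arg_cong[where f = exp]) (simp add: algebra_simps)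
    also have "\<dots> = exp (l * (p * real (nsel sel (t # hs)) - real (nsuc sel ind (t # hs))) - real (nsel sel (t # hs)) * l\<^sup>2 / 8)"
      using True by (cases "ind t") (simp_all add: a_def b_def i_def algebra_simps)
    finally show ?thesis .
  next
    case False
    then show ?thesis by (simp add: Cons phi_def)
  qed
qed

lemma prodW_nonneg: "prodW sel ind p l hs \<ge> 0"
  unfolding prodW_eq by simp

lemma bern_bound:
  fixes p l :: real
  assumes "0 \<le> p" "p \<le> 1" "0 \<le> l"
  shows "p * exp (l * (p - 1) - l\<^sup>2 / 8) + (1 - p) * exp (l * p - l\<^sup>2 / 8) \<le> 1"
proof -
  define A where "A = 1 + (1 - p) * (exp l - 1)"
  have Apos: "A > 0" unfolding A_def using assms by (intro add_pos_nonneg mult_nonneg_nonneg) auto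
  have "- l * (1 - p) + ln A \<le> l\<^sup>2 / 8"
    unfolding A_def by (rule Hoeffdings_lemma_aux) (use assms in auto)
  then have "ln A \<le> l * (1 - p) + l\<^sup>2 / 8" by simp
  then have A: "A \<le> exp (l * (1 - p) + l\<^sup>2 / 8)"
    using Apos by (metis exp_le_cancel_iff exp_ln)
  define c where "c = l * p - l\<^sup>2 / 8"
  have e1: "l * (p - 1) - l\<^sup>2 / 8 = c - l" unfolding c_def by (simp add: algebra_simps)
  have e2: "exp (c - l) * exp l = exp c" by (simp add: exp_diff)
  have e3: "l * (1 - p) + l\<^sup>2 / 8 = l - c" unfolding c_def by (simp add: algebra_simps)
  have "p * exp (l * (p - 1) - l\<^sup>2 / 8) + (1 - p) * exp (l * p - l\<^sup>2 / 8)
        = p * exp (c - l) + (1 - p) * exp c"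
    by (simp only: e1 c_def[symmetric])
  also have "\<dots> = p * exp (c - l) + (1 - p) * (exp (c - l) * exp l)"
    by (simp only: e2)
  also have "\<dots> = exp (c - l) * A" unfolding A_def by (simp add: algebra_simps)
  also have "\<dots> \<le> exp (c - l) * exp (l - c)"
    using A unfolding e3 by (rule mult_left_mono) simp
  also have "\<dots> = 1" by (simp add: exp_add[symmetric])
  finally show ?thesis .
qed

lemma sum_Collect_if: "sum f {t::'b::finite. P t} = (\<Sum>t\<in>UNIV. if P t then f t else 0)"
  by (simp add: sum.inter_filter[symmetric])


context obsmodel
begin

lemma step:
  assumes len: "length hs < N" and p: "0 \<le> p" "p \<le> 1" and l: "0 \<le> l"
    and Gc: "(\<Sum>t\<in>{t. sel hs t \<and> ind t}. measure M (EV M X Y Z (t # hs)))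
             = p * (\<Sum>t\<in>{t. sel hs t}. measure M (EV M X Y Z (t # hs)))"
  shows "(\<Sum>t\<in>UNIV. phi sel ind p l hs t * measure M (EV M X Y Z (t # hs))) \<le> measure M (EV M X Y Z hs)"
proof -
  define m where "m t = measure M (EV M X Y Z (t # hs))" for t
  define a where "a = exp (l * (p - 1) - l\<^sup>2 / 8)"
  define b where "b = exp (l * p - l\<^sup>2 / 8)"
  define S11 where "S11 = (\<Sum>t\<in>UNIV. if sel hs t \<and> ind t then m t else 0)"
  define S10 where "S10 = (\<Sum>t\<in>UNIV. if sel hs t \<and> \<not> ind t then m t else 0)"
  define S1 where "S1 = (\<Sum>t\<in>UNIV. if sel hs t then m t else 0)"
  have S1: "S1 = S11 + S10" unfolding S1_def S11_def S10_def sum.distrib[symmetric]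
    by (rule sum.cong) auto
  have G: "S11 = p * S1" using Gc unfolding S11_def S1_def m_def sum_Collect_if .
  have S1nn: "S1 \<ge> 0" unfolding S1_def m_def by (intro sum_nonneg) auto
  have ph: "phi sel ind p l hs t * m t = m t + (if sel hs t \<and> ind t then (a - 1) * m t else 0)
      + (if sel hs t \<and> \<not> ind t then (b - 1) * m t else 0)" for t
    by (auto simp: phi_def a_def b_def algebra_simps)
  have "(\<Sum>t\<in>UNIV. phi sel ind p l hs t * m t) = (\<Sum>t\<in>UNIV. m t) + (a - 1) * S11 + (b - 1) * S10"
    unfolding ph sum.distrib S11_def S10_def sum_distrib_left by (simp add: if_distrib cong: if_cong)
  also have "\<dots> = (\<Sum>t\<in>UNIV. m t) + S1 * (a * p + b * (1 - p) - 1)"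
  proof -
    have S10: "S10 = S1 - p * S1" using S1 G by simp
    show ?thesis unfolding S10 G by (simp add: algebra_simps)
  qed
  also have "\<dots> \<le> (\<Sum>t\<in>UNIV. m t) + S1 * 0"
    using bern_bound[OF p l] S1nn unfolding a_def b_def
    by (intro add_left_mono mult_left_mono) (auto simp: algebra_simps)
  also have "\<dots> = measure M (EV M X Y Z hs)"
    unfolding m_def using sum_EV_Cons_UNIV[OF len] by simp
  finally show ?thesis unfolding m_def .
qed

lemma supermart:
  assumes p: "0 \<le> p" "p \<le> 1" and l: "0 \<le> l"
    and Gc: "\<And>hs. length hs < N \<Longrightarrow> (\<Sum>t\<in>{t. sel hs t \<and> ind t}. measure M (EV M X Y Z (t # hs)))
             = p * (\<Sum>t\<in>{t. sel hs t}. measure M (EV M X Y Z (t # hs)))"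
  shows "k \<le> N \<Longrightarrow> (\<Sum>hs\<in>LS k. prodW sel ind p l hs * measure M (EV M X Y Z hs)) \<le> 1"
proof (induction k)
  case 0 then show ?case by (simp add: LS_0 EV_Nil prob_space)
next
  case (Suc k)
  have "(\<Sum>hs\<in>LS (Suc k). prodW sel ind p l hs * measure M (EV M X Y Z hs))
     = (\<Sum>hs\<in>LS k. prodW sel ind p l hs * (\<Sum>t\<in>UNIV. phi sel ind p l hs t * measure M (EV M X Y Z (t # hs))))"
    unfolding sum_LS_Suc by (simp add: sum_distrib_left mult.assoc)
  also have "\<dots> \<le> (\<Sum>hs\<in>LS k. prodW sel ind p l hs * measure M (EV M X Y Z hs))"
  proof (intro sum_mono mult_left_mono prodW_nonneg)
    fix hs assume "hs \<in> LS k"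
    then have "length hs < N" using Suc by (auto simp: LS_def)
    then show "(\<Sum>t\<in>UNIV. phi sel ind p l hs t * measure M (EV M X Y Z (t # hs))) \<le> measure M (EV M X Y Z hs)"
      by (intro step p l Gc)
  qed
  also have "\<dots> \<le> 1" using Suc by simp
  finally show ?case .
qed

lemma concentration:
  fixes p w :: real and m :: nat
  assumes p: "0 \<le> p" "p \<le> 1" and w: "0 \<le> w"
    and Gc: "\<And>hs. length hs < N \<Longrightarrow> (\<Sum>t\<in>{t. sel hs t \<and> ind t}. measure M (EV M X Y Z (t # hs)))
             = p * (\<Sum>t\<in>{t. sel hs t}. measure M (EV M X Y Z (t # hs)))"
  shows "measure M {\<omega> \<in> space M. nsel sel (obs X Y Z N \<omega>) = m \<and> real (nsuc sel ind (obs X Y Z N \<omega>)) \<le> p * real m - real m * w}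
         \<le> exp (- 2 * real m * w\<^sup>2)"
proof -
  define S where "S = {hs \<in> LS N. nsel sel hs = m \<and> real (nsuc sel ind hs) \<le> p * real m - real m * w}"
  define l where "l = 4 * w"
  have SLS: "S \<subseteq> LS N" unfolding S_def by auto
  have eq: "{\<omega> \<in> space M. nsel sel (obs X Y Z N \<omega>) = m \<and> real (nsuc sel ind (obs X Y Z N \<omega>)) \<le> p * real m - real m * w}
      = {\<omega> \<in> space M. obs X Y Z N \<omega> \<in> S}"
    by (auto simp: S_def LS_def)
  have big: "1 \<le> prodW sel ind p l hs * exp (- 2 * real m * w\<^sup>2)" if "hs \<in> S" for hs
  proof -
    define b where "b = real (nsuc sel ind hs)"
    from that have h1: "nsel sel hs = m" and h2: "b \<le> p * real m - real m * w" by (auto simp: S_def b_def)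
    have "p * real m - b \<ge> real m * w" using h2 by simp
    then have "l * (p * real m - b) \<ge> l * (real m * w)" unfolding l_def using w by (intro mult_left_mono) auto
    then have "l * (p * real m - b) - real m * l\<^sup>2 / 8 - 2 * real m * w\<^sup>2 \<ge> 0"
      unfolding l_def by (simp add: power2_eq_square algebra_simps)
    then have "exp (l * (p * real m - b) - real m * l\<^sup>2 / 8 - 2 * real m * w\<^sup>2) \<ge> 1" by simp
    also have "exp (l * (p * real m - b) - real m * l\<^sup>2 / 8 - 2 * real m * w\<^sup>2)
       = exp (l * (p * real m - b) - real m * l\<^sup>2 / 8) * exp (- 2 * real m * w\<^sup>2)"
      unfolding exp_add[symmetric] by (rule arg_cong[where f = exp]) simp
    finally show ?thesis unfolding prodW_eq h1 b_def .
  qed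
  have "measure M {\<omega> \<in> space M. obs X Y Z N \<omega> \<in> S} = (\<Sum>hs\<in>S. measure M (EV M X Y Z hs))"
    by (rule measure_obs_in[OF SLS])
  also have "\<dots> \<le> (\<Sum>hs\<in>S. prodW sel ind p l hs * exp (- 2 * real m * w\<^sup>2) * measure M (EV M X Y Z hs))"
  proof (intro sum_mono)
    fix hs assume "hs \<in> S"
    then show "measure M (EV M X Y Z hs) \<le> prodW sel ind p l hs * exp (- 2 * real m * w\<^sup>2) * measure M (EV M X Y Z hs)"
      using big[of hs] mult_right_mono[of 1 "prodW sel ind p l hs * exp (- 2 * real m * w\<^sup>2)" "measure M (EV M X Y Z hs)"]
      by simp
  qed
  also have "\<dots> \<le> (\<Sum>hs\<in>LS N. prodW sel ind p l hs * exp (- 2 * real m * w\<^sup>2) * measure M (EV M X Y Z hs))"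
    by (intro sum_mono2 SLS) (auto simp: prodW_nonneg)
  also have "\<dots> = exp (- 2 * real m * w\<^sup>2) * (\<Sum>hs\<in>LS N. prodW sel ind p l hs * measure M (EV M X Y Z hs))"
    by (simp add: sum_distrib_left mult.commute mult.left_commute)
  also have "\<dots> \<le> exp (- 2 * real m * w\<^sup>2) * 1"
    unfolding l_def using w by (intro mult_left_mono supermart p Gc) auto
  finally show ?thesis unfolding eq by simp
qed

end


definition cntL :: "bool \<Rightarrow> bool \<Rightarrow> trip3 list \<Rightarrow> nat" where
  "cntL x z hs = length (filter (\<lambda>t. fst t = x \<and> snd (snd t) = z) hs)"
definition selY :: "bool \<Rightarrow> bool \<Rightarrow> nat \<Rightarrow> trip3 list \<Rightarrow> trip3 \<Rightarrow> bool" where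
  "selY x z m = (\<lambda>hs t. fst t = x \<and> snd (snd t) = z \<and> cntL x z hs < m)"
definition indY :: "bool \<Rightarrow> trip3 \<Rightarrow> bool" where
  "indY y = (\<lambda>t. fst (snd t) = y)"
definition selZ :: "trip3 list \<Rightarrow> trip3 \<Rightarrow> bool" where
  "selZ = (\<lambda>hs t. True)"
definition indZ :: "bool \<Rightarrow> trip3 \<Rightarrow> bool" where
  "indZ z = (\<lambda>t. snd (snd t) = z)"

lemma card_Suc_filter:
  "card {k \<in> {1..Suc n}. P k} = card {k \<in> {1..n}. P k} + (if P (Suc n) then 1 else 0)"
proof -
  have eq: "{k \<in> {1..Suc n}. P k} = (if P (Suc n) then insert (Suc n) {k \<in> {1..n}. P k} else {k \<in> {1..n}. P k})"
    by (auto simp: le_Suc_eq)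
  show ?thesis unfolding eq by simp
qed

lemma cnt_obs: "cnt X Z n x z \<omega> = cntL x z (obs X Y Z n \<omega>)"
proof (induction n)
  case 0 then show ?case by (simp add: cnt_def cntL_def)
next
  case (Suc n)
  then show ?case unfolding cnt_def using card_Suc_filter[of n "\<lambda>k. X k \<omega> = x \<and> Z k \<omega> = z"]
    by (simp add: cntL_def cnt_def)
qed

lemma nsel_selY: "nsel (selY x z m) hs = min (cntL x z hs) m"
  by (induction hs) (auto simp: selY_def cntL_def)

lemma nsel_selZ: "nsel selZ hs = length hs"
  by (induction hs) (auto simp: selZ_def)

lemma nsuc_selY: "card {k \<in> {1..n}. cnt X Z k x z \<omega> \<le> m \<and> X k \<omega> = x \<and> Y k \<omega> = y \<and> Z k \<omega> = z}
   = nsuc (selY x z m) (indY y) (obs X Y Z n \<omega>)"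
proof (induction n)
  case 0 then show ?case by simp
next
  case (Suc n)
  have c: "cnt X Z (Suc n) x z \<omega> = cntL x z (obs X Y Z n \<omega>) + (if X (Suc n) \<omega> = x \<and> Z (Suc n) \<omega> = z then 1 else 0)"
    unfolding cnt_obs[where Y = Y] by (simp add: cntL_def)
  show ?case
    unfolding card_Suc_filter[of n] Suc using c
    by (auto simp: selY_def indY_def)
qed

lemma nsuc_selZ: "card {k \<in> {1..n}. Z k \<omega> = z} = nsuc selZ (indZ z) (obs X Y Z n \<omega>)"
proof (induction n)
  case 0 then show ?case by simp
next
  case (Suc n)
  show ?case unfolding card_Suc_filter[of n] Suc by (auto simp: selZ_def indZ_def)
qed

lemma floor2_ge2: assumes "2 \<le> c" shows "\<exists>k\<ge>1. floor2 c = 2 ^ k \<and> 2 ^ k \<le> c"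
proof -
  let ?P = "\<lambda>m. \<exists>k\<ge>1. m = (2::nat) ^ k \<and> m \<le> c"
  have "?P 2" using assms by (intro exI[of _ 1]) auto
  then have "?P (Greatest ?P)" by (rule GreatestI_nat[where b = c]) auto
  then show ?thesis using assms unfolding floor2_def by auto
qed

lemma floor2_lt2: "c < 2 \<Longrightarrow> floor2 c = 1"
  by (simp add: floor2_def)

lemma width_not_minf: "width c d \<noteq> - \<infinity>"
  by (simp add: width_def)

lemma ereal_add_inf: "a \<noteq> - \<infinity> \<Longrightarrow> b \<noteq> - \<infinity> \<Longrightarrow> a = \<infinity> \<or> b = \<infinity> \<Longrightarrow> a + b = (\<infinity>::ereal)"
  by (cases a; cases b) auto

lemma inv_sq_sum: "n \<ge> 1 \<Longrightarrow> (\<Sum>k\<in>{1..n}. 1 / (real k)\<^sup>2) \<le> 2 - 1 / real n"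
proof (induction n rule: dec_induct)
  case base then show ?case by simp
next
  case (step n)
  have "(\<Sum>k\<in>{1..Suc n}. 1 / (real k)\<^sup>2) = (\<Sum>k\<in>{1..n}. 1 / (real k)\<^sup>2) + 1 / (real n + 1)\<^sup>2"
    by simp
  also have "\<dots> \<le> 2 - 1 / real n + 1 / (real n + 1)\<^sup>2" using step by simp
  also have "\<dots> \<le> 2 - 1 / real (Suc n)"
  proof -
    have n: "real n \<ge> 1" using step by simp
    have "1 / (real n + 1)\<^sup>2 \<le> 1 / (real n * (real n + 1))"
      using n by (intro divide_left_mono) (auto simp: power2_eq_square)
    also have "\<dots> = 1 / real n - 1 / (real n + 1)" using n by (simp add: field_simps)
    finally have "1 / (real n + 1)\<^sup>2 \<le> 1 / real n - 1 / (real n + 1)" .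
    moreover have "real (Suc n) = real n + 1" by simp
    ultimately show ?thesis by (simp only:)
  qed
  finally show ?case .
qed

lemma inv_sq_sum2: "(\<Sum>k\<in>{1..n}. 1 / (real k)\<^sup>2) \<le> 2"
proof (cases "n \<ge> 1")
  case True
  then show ?thesis using inv_sq_sum[OF True] by (smt (verit) of_nat_0_le_iff divide_nonneg_nonneg)
qed simp

lemma main_alg:
  fixes q ph pc pi s w :: real
  assumes "0 \<le> q" "q \<le> 1" "0 \<le> ph" "ph \<le> 1" "pi - ph < s" "q - pc < w" "0 \<le> s" "0 \<le> w"
  shows "q * pi - ph * pc \<le> s + w"
proof -
  have e: "q * pi - ph * pc = q * (pi - ph) + ph * (q - pc)" by (simp add: algebra_simps)
  have 1: "q * (pi - ph) \<le> q * s" using assms by (intro mult_left_mono) auto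
  have 2: "q * s \<le> s" using assms by (simp add: mult_left_le_one_le)
  have 3: "ph * (q - pc) \<le> ph * w" using assms by (intro mult_left_mono) auto
  have 4: "ph * w \<le> w" using assms by (simp add: mult_left_le_one_le)
  show ?thesis unfolding e using 1 2 3 4 by linarith
qed

context obsmodel
begin

lemma obs_pred_sets: "{\<omega> \<in> space M. P (obs X Y Z N \<omega>)} \<in> sets M"
proof -
  have "{\<omega> \<in> space M. P (obs X Y Z N \<omega>)} = {\<omega> \<in> space M. obs X Y Z N \<omega> \<in> {hs \<in> LS N. P hs}}"
    by (auto simp: LS_def)
  then show ?thesis using obs_in_sets[of "{hs \<in> LS N. P hs}"] by auto
qed

lemma GcZ:
  assumes Zc: "\<And>n h z. n \<in> {1..N} \<Longrightarrow>
          measure M (hist_event M X Y Z n h \<inter> {\<omega>. Z n \<omega> = z})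
            = pmf \<pi> z * measure M (hist_event M X Y Z n h)"
    and len: "length hs < N"
  shows "(\<Sum>t\<in>{t. selZ hs t \<and> indZ z t}. measure M (EV M X Y Z (t # hs)))
       = pmf \<pi> z * (\<Sum>t\<in>{t. selZ hs t}. measure M (EV M X Y Z (t # hs)))"
proof -
  let ?n = "Suc (length hs)"
  let ?h = "\<lambda>i. hs ! (length hs - i)"
  have "(\<Sum>t\<in>{t. selZ hs t \<and> indZ z t}. measure M (EV M X Y Z (t # hs)))
      = measure M (EV M X Y Z hs \<inter> {\<omega>. (X ?n \<omega>, Y ?n \<omega>, Z ?n \<omega>) \<in> {t. selZ hs t \<and> indZ z t}})"
    by (rule sum_EV_Cons[OF len])
  also have "EV M X Y Z hs \<inter> {\<omega>. (X ?n \<omega>, Y ?n \<omega>, Z ?n \<omega>) \<in> {t. selZ hs t \<and> indZ z t}}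
      = hist_event M X Y Z ?n ?h \<inter> {\<omega>. Z ?n \<omega> = z}"
    unfolding EV_hist[OF len, symmetric] by (auto simp: selZ_def indZ_def)
  also have "measure M \<dots> = pmf \<pi> z * measure M (hist_event M X Y Z ?n ?h)"
    using len by (intro Zc) auto
  also have "measure M (hist_event M X Y Z ?n ?h) = (\<Sum>t\<in>{t. selZ hs t}. measure M (EV M X Y Z (t # hs)))"
    unfolding EV_hist[OF len, symmetric] using sum_EV_Cons_UNIV[OF len] by (simp add: selZ_def)
  finally show ?thesis .
qed

lemma GcY:
  assumes Yc: "\<And>n h x z y. n \<in> {1..N} \<Longrightarrow>
          measure M (hist_event M X Y Z n h \<inter> {\<omega>. Z n \<omega> = z \<and> X n \<omega> = x \<and> Y n \<omega> = y})
            = pmf (q x z) y * measure M (hist_event M X Y Z n h \<inter> {\<omega>. Z n \<omega> = z \<and> X n \<omega> = x})"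
    and len: "length hs < N"
  shows "(\<Sum>t\<in>{t. selY x z m hs t \<and> indY y t}. measure M (EV M X Y Z (t # hs)))
       = pmf (q x z) y * (\<Sum>t\<in>{t. selY x z m hs t}. measure M (EV M X Y Z (t # hs)))"
proof (cases "cntL x z hs < m")
  case False
  then have e1: "{t. selY x z m hs t \<and> indY y t} = {}" and e2: "{t. selY x z m hs t} = {}" by (auto simp: selY_def)
  show ?thesis unfolding e1 e2 by simp
next
  case True
  let ?n = "Suc (length hs)"
  let ?h = "\<lambda>i. hs ! (length hs - i)"
  have "(\<Sum>t\<in>{t. selY x z m hs t \<and> indY y t}. measure M (EV M X Y Z (t # hs)))
      = measure M (EV M X Y Z hs \<inter> {\<omega>. (X ?n \<omega>, Y ?n \<omega>, Z ?n \<omega>) \<in> {t. selY x z m hs t \<and> indY y t}})"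
    by (rule sum_EV_Cons[OF len])
  also have "EV M X Y Z hs \<inter> {\<omega>. (X ?n \<omega>, Y ?n \<omega>, Z ?n \<omega>) \<in> {t. selY x z m hs t \<and> indY y t}}
      = hist_event M X Y Z ?n ?h \<inter> {\<omega>. Z ?n \<omega> = z \<and> X ?n \<omega> = x \<and> Y ?n \<omega> = y}"
    unfolding EV_hist[OF len, symmetric] using True by (auto simp: selY_def indY_def)
  also have "measure M \<dots> = pmf (q x z) y * measure M (hist_event M X Y Z ?n ?h \<inter> {\<omega>. Z ?n \<omega> = z \<and> X ?n \<omega> = x})"
    using len by (intro Yc) auto
  also have "hist_event M X Y Z ?n ?h \<inter> {\<omega>. Z ?n \<omega> = z \<and> X ?n \<omega> = x}
      = EV M X Y Z hs \<inter> {\<omega>. (X ?n \<omega>, Y ?n \<omega>, Z ?n \<omega>) \<in> {t. selY x z m hs t}}"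
    unfolding EV_hist[OF len, symmetric] using True by (auto simp: selY_def)
  also have "measure M \<dots> = (\<Sum>t\<in>{t. selY x z m hs t}. measure M (EV M X Y Z (t # hs)))"
    by (rule sum_EV_Cons[OF len, symmetric])
  finally show ?thesis .
qed

end


theorem corollary1:
  fixes M :: "'a measure"
    and X Y Z :: "nat \<Rightarrow> 'a \<Rightarrow> bool"
    and Yt :: "'a \<Rightarrow> bool"
    and \<pi> :: "bool pmf"
    and q :: "bool \<Rightarrow> bool \<Rightarrow> bool pmf"
    and N :: nat and \<delta> :: real and xt :: bool
  assumes "prob_space M"
    and "N \<ge> 1"
    and meas: "\<And>n. n \<in> {1..N} \<Longrightarrow>
          X n \<in> measurable M (count_space UNIV) \<and>
          Y n \<in> measurable M (count_space UNIV) \<and>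
          Z n \<in> measurable M (count_space UNIV)"
    and measY: "Yt \<in> measurable M (count_space UNIV)"
    and Zcond: "\<And>n h z. n \<in> {1..N} \<Longrightarrow>
          measure M (hist_event M X Y Z n h \<inter> {\<omega>. Z n \<omega> = z})
            = pmf \<pi> z * measure M (hist_event M X Y Z n h)"
    and Ycond: "\<And>n h x z y. n \<in> {1..N} \<Longrightarrow>
          measure M (hist_event M X Y Z n h \<inter> {\<omega>. Z n \<omega> = z \<and> X n \<omega> = x \<and> Y n \<omega> = y})
            = pmf (q x z) y * measure M (hist_event M X Y Z n h \<inter> {\<omega>. Z n \<omega> = z \<and> X n \<omega> = x})"
    and "\<delta> > 0"
    and Ydist: "\<And>y. measure M {\<omega> \<in> space M. Yt \<omega> = y} = (\<Sum>z\<in>UNIV. pmf (q xt z) y * pmf \<pi> z)"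
  shows "measure M {\<omega> \<in> space M. Yt \<omega> \<notin> Gamma X Y Z N \<delta> xt \<omega>} \<le> \<delta>"
proof -
  have om: "obsmodel M X Y Z N" unfolding obsmodel_def obsmodel_axioms_def using assms(1) meas by blast
  interpret obsmodel M X Y Z N by (fact om)
  show ?thesis
  proof (cases "\<delta> \<ge> 1")
    case True
    have "measure M {\<omega> \<in> space M. Yt \<omega> \<notin> Gamma X Y Z N \<delta> xt \<omega>} \<le> 1" by (rule prob_le_1)
    then show ?thesis using True by linarith
  next
    case False
    then have d1: "\<delta> < 1" by simp
    have dpos: "\<delta> > 0" by fact
    have Npos: "real N > 0" using \<open>N \<ge> 1\<close> by simp
    define s where "s = sqrt (ln (12 / \<delta>) / (2 * real N))"
    define wk where "wk k = sqrt ((2 * ln (real k) + ln (20 / \<delta>)) / (2 * real ((2::nat) ^ k)))" for k :: nat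
    define py where "py y = (\<Sum>z\<in>UNIV. pmf (q xt z) y * pmf \<pi> z)" for y
    define BZ where "BZ z = {\<omega> \<in> space M. nsel selZ (obs X Y Z N \<omega>) = N \<and>
        real (nsuc selZ (indZ z) (obs X Y Z N \<omega>)) \<le> pmf \<pi> z * real N - real N * s}" for z
    define BY where "BY y z k = {\<omega> \<in> space M. nsel (selY xt z (2 ^ k)) (obs X Y Z N \<omega>) = 2 ^ k \<and>
        real (nsuc (selY xt z (2 ^ k)) (indY y) (obs X Y Z N \<omega>))
          \<le> pmf (q xt z) y * real ((2::nat) ^ k) - real ((2::nat) ^ k) * wk k}" for y z k
    define Bad where "Bad y = (\<Union>z. BZ z) \<union> (\<Union>z. \<Union>k\<in>{1..N}. BY y z k)" for y

    have g12: "12 / \<delta> > 1" using dpos d1 by (simp add: field_simps)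
    have l12: "ln (12 / \<delta>) > 0" by (rule ln_gt_zero[OF g12])
    have g20: "20 / \<delta> > 1" using dpos d1 by (simp add: field_simps)
    have l20: "ln (20 / \<delta>) > 0" by (rule ln_gt_zero[OF g20])
    have s_nn: "s \<ge> 0" unfolding s_def using l12 Npos by simp
    have wk_nn: "wk k \<ge> 0" if "k \<ge> 1" for k
    proof -
      have "ln (real k) \<ge> 0" using that by simp
      then show ?thesis unfolding wk_def using l20 by simp
    qed

    have BZ_sets: "BZ z \<in> sets M" for z
      using obs_pred_sets[of "\<lambda>hs. nsel selZ hs = N \<and> real (nsuc selZ (indZ z) hs) \<le> pmf \<pi> z * real N - real N * s"]
      unfolding BZ_def by simp
    have BY_sets: "BY y z k \<in> sets M" for y z k
      using obs_pred_sets[of "\<lambda>hs. nsel (selY xt z (2 ^ k)) hs = 2 ^ k \<and>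
        real (nsuc (selY xt z (2 ^ k)) (indY y) hs) \<le> pmf (q xt z) y * real ((2::nat) ^ k) - real ((2::nat) ^ k) * wk k"]
      unfolding BY_def by simp

    have BZ_bound: "measure M (BZ z) \<le> \<delta> / 12" for z
    proof -
      have "measure M (BZ z) \<le> exp (- 2 * real N * s\<^sup>2)"
        unfolding BZ_def by (rule concentration[OF pmf_nonneg pmf_le_1 s_nn GcZ[OF Zcond]])
      also have "s\<^sup>2 = ln (12 / \<delta>) / (2 * real N)" unfolding s_def using l12 Npos by simp
      also have "- 2 * real N * (ln (12 / \<delta>) / (2 * real N)) = - ln (12 / \<delta>)" using Npos by simp
      also have "exp (- ln (12 / \<delta>)) = \<delta> / 12" using dpos by (simp add: exp_minus)
      finally show ?thesis .
    qed
    have BY_bound: "measure M (BY y z k) \<le> \<delta> / (20 * (real k)\<^sup>2)" if k: "k \<ge> 1" for y z k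
    proof -
      have "measure M (BY y z k) \<le> exp (- 2 * real ((2::nat) ^ k) * (wk k)\<^sup>2)"
        unfolding BY_def by (rule concentration[OF pmf_nonneg pmf_le_1 wk_nn[OF k] GcY[OF Ycond]])
      also have "(wk k)\<^sup>2 = (2 * ln (real k) + ln (20 / \<delta>)) / (2 * real ((2::nat) ^ k))"
      proof -
        have "ln (real k) \<ge> 0" using k by simp
        then show ?thesis unfolding wk_def using l20 by simp
      qed
      also have "- 2 * real ((2::nat) ^ k) * ((2 * ln (real k) + ln (20 / \<delta>)) / (2 * real ((2::nat) ^ k)))
          = - ln ((real k)\<^sup>2 * (20 / \<delta>))"
      proof -
        have kp: "real k > 0" using k by simp
        have "ln ((real k)\<^sup>2 * (20 / \<delta>)) = ln ((real k)\<^sup>2) + ln (20 / \<delta>)"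
          by (subst ln_mult) (use kp dpos in simp)
        also have "ln ((real k)\<^sup>2) = 2 * ln (real k)" using kp by (simp add: ln_realpow)
        finally have "ln ((real k)\<^sup>2 * (20 / \<delta>)) = 2 * ln (real k) + ln (20 / \<delta>)" .
        then show ?thesis by simp
      qed
      also have "exp (- ln ((real k)\<^sup>2 * (20 / \<delta>))) = \<delta> / (20 * (real k)\<^sup>2)"
        using k dpos by (simp add: exp_minus)
      finally show ?thesis .
    qed
    have sumk: "(\<Sum>k\<in>{1..N}. \<delta> / (20 * (real k)\<^sup>2)) \<le> \<delta> / 10"
    proof -
      have "(\<Sum>k\<in>{1..N}. \<delta> / (20 * (real k)\<^sup>2)) = \<delta> / 20 * (\<Sum>k\<in>{1..N}. 1 / (real k)\<^sup>2)"
        by (simp add: sum_distrib_left)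
      also have "\<dots> \<le> \<delta> / 20 * 2" using dpos inv_sq_sum2[of N] by (intro mult_left_mono) auto
      finally show ?thesis by simp
    qed

    have Bad_sets: "Bad y \<in> sets M" for y
      unfolding Bad_def using BZ_sets BY_sets by (intro sets.Un sets.finite_UN) auto
    have Bad_bound: "measure M (Bad y) \<le> 11 / 30 * \<delta>" for y
    proof -
      have s1: "(\<Union>z. BZ z) \<in> sets M" using BZ_sets by (intro sets.finite_UN) auto
      have s2: "(\<Union>z. \<Union>k\<in>{1..N}. BY y z k) \<in> sets M" using BY_sets by (intro sets.finite_UN) auto
      have "measure M (\<Union>z. BZ z) \<le> (\<Sum>z\<in>UNIV. measure M (BZ z))"
        using BZ_sets by (intro measure_UNION_le) auto
      also have "\<dots> \<le> \<delta> / 12 + \<delta> / 12" using BZ_bound[of False] BZ_bound[of True] by (simp add: UNIV_bool)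
      finally have m1: "measure M (\<Union>z. BZ z) \<le> \<delta> / 6" by simp
      have m2z: "measure M (\<Union>k\<in>{1..N}. BY y z k) \<le> \<delta> / 10" for z
      proof -
        have "measure M (\<Union>k\<in>{1..N}. BY y z k) \<le> (\<Sum>k\<in>{1..N}. measure M (BY y z k))"
          using BY_sets by (intro measure_UNION_le) auto
        also have "\<dots> \<le> (\<Sum>k\<in>{1..N}. \<delta> / (20 * (real k)\<^sup>2))"
          by (intro sum_mono BY_bound) auto
        also have "\<dots> \<le> \<delta> / 10" by (rule sumk)
        finally show ?thesis .
      qed
      have "measure M (\<Union>z. \<Union>k\<in>{1..N}. BY y z k) \<le> (\<Sum>z\<in>UNIV. measure M (\<Union>k\<in>{1..N}. BY y z k))"
        using BY_sets by (intro measure_UNION_le sets.finite_UN) auto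
      also have "\<dots> \<le> \<delta> / 10 + \<delta> / 10" using m2z[of False] m2z[of True] by (simp add: UNIV_bool)
      finally have m2: "measure M (\<Union>z. \<Union>k\<in>{1..N}. BY y z k) \<le> \<delta> / 5" by simp
      have "measure M (Bad y) \<le> measure M (\<Union>z. BZ z) + measure M (\<Union>z. \<Union>k\<in>{1..N}. BY y z k)"
        unfolding Bad_def using s1 s2 by (rule measure_Un_le)
      then show ?thesis using m1 m2 by linarith
    qed

    have det: "y \<in> Gamma X Y Z N \<delta> xt \<omega>" if \<omega>: "\<omega> \<in> space M" and nb: "\<omega> \<notin> Bad y" and pyg: "py y > \<delta> / 2" for \<omega> y
    proof (rule ccontr)
      assume ng: "y \<notin> Gamma X Y Z N \<delta> xt \<omega>"
      define c where "c z = cnt X Z N xt z \<omega>" for z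
      define A where "A = (\<Sum>z\<in>UNIV. phat Z N z \<omega> * pcheck X Y Z N y xt z \<omega>)"
      have ng': "\<not> (ereal (A + 2 * s) + (\<Sum>z\<in>UNIV. width (c z) \<delta>) > ereal (\<delta> / 2))"
        using ng unfolding Gamma_def A_def c_def s_def by simp
      have c2: "2 \<le> c z" for z
      proof (rule ccontr)
        assume "\<not> 2 \<le> c z"
        then have wi: "width (c z) \<delta> = \<infinity>" by (simp add: width_def floor2_lt2)
        have "(\<Sum>z\<in>UNIV. width (c z) \<delta>) = width (c False) \<delta> + width (c True) \<delta>" by (simp add: UNIV_bool)
        also have "\<dots> = \<infinity>" using wi by (intro ereal_add_inf width_not_minf) (cases z, auto)
        finally show False using ng' by simp
      qed
      obtain kk where kk: "\<And>z. kk z \<ge> 1 \<and> floor2 (c z) = 2 ^ (kk z) \<and> 2 ^ (kk z) \<le> c z"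
        using floor2_ge2[OF c2] by metis
      have cN: "c z \<le> N" for z
      proof -
        have "c z \<le> card {1..N}" unfolding c_def cnt_def by (rule card_mono) auto
        then show ?thesis by simp
      qed
      have kN: "kk z \<in> {1..N}" for z
      proof -
        have a: "kk z < 2 ^ kk z" by simp
        have b: "2 ^ kk z \<le> c z" "1 \<le> kk z" using kk[of z] by auto
        have "kk z \<le> N" using a b cN[of z] by linarith
        then show ?thesis using b by simp
      qed
      have wz: "width (c z) \<delta> = ereal (wk (kk z))" for z
      proof -
        have fl: "floor2 (c z) = 2 ^ kk z" using kk by blast
        have p2: "(2::nat) ^ 1 \<le> 2 ^ kk z" using kk[of z] by (intro power_increasing) auto
        have lg: "log 2 (real ((2::nat) ^ kk z)) = real (kk z)" by simp
        have nlt: "\<not> floor2 (c z) < 2" using fl p2 by simp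
        show ?thesis unfolding width_def wk_def using nlt lg fl by simp
      qed
      have sumw: "(\<Sum>z\<in>UNIV. width (c z) \<delta>) = ereal (wk (kk False) + wk (kk True))"
        by (simp add: UNIV_bool wz)
      have ineq: "A + 2 * s + (wk (kk False) + wk (kk True)) \<le> \<delta> / 2"
        using ng' unfolding sumw by simp
      have hZ: "pmf \<pi> z - phat Z N z \<omega> < s" for z
      proof -
        have "\<omega> \<notin> BZ z" using nb unfolding Bad_def by auto
        moreover have "nsel selZ (obs X Y Z N \<omega>) = N" by (simp add: nsel_selZ)
        ultimately have "real (nsuc selZ (indZ z) (obs X Y Z N \<omega>)) > pmf \<pi> z * real N - real N * s"
          using \<omega> unfolding BZ_def by auto
        then have "real (card {k \<in> {1..N}. Z k \<omega> = z}) > pmf \<pi> z * real N - real N * s"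
          unfolding nsuc_selZ[symmetric] .
        then have "(pmf \<pi> z - s) * real N < real (card {k \<in> {1..N}. Z k \<omega> = z})"
          by (simp add: algebra_simps)
        then have "pmf \<pi> z - s < real (card {k \<in> {1..N}. Z k \<omega> = z}) / real N"
          by (simp add: pos_less_divide_eq[OF Npos])
        then show ?thesis unfolding phat_def by simp
      qed
      have hY: "pmf (q xt z) y - pcheck X Y Z N y xt z \<omega> < wk (kk z)" for z
      proof -
        define m where "m = (2::nat) ^ kk z"
        have mpos: "real m > 0" unfolding m_def by simp
        have "\<omega> \<notin> BY y z (kk z)" using nb kN[of z] unfolding Bad_def by auto
        moreover have "nsel (selY xt z m) (obs X Y Z N \<omega>) = m"
          unfolding nsel_selY cnt_obs[symmetric] using kk[of z] unfolding m_def c_def by simp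
        ultimately have gt: "real (nsuc (selY xt z m) (indY y) (obs X Y Z N \<omega>)) > pmf (q xt z) y * real m - real m * wk (kk z)"
          using \<omega> unfolding BY_def m_def by auto
        have fl: "floor2 (cnt X Z N xt z \<omega>) = m" using kk[of z] unfolding m_def c_def by blast
        have pc: "pcheck X Y Z N y xt z \<omega> = real (nsuc (selY xt z m) (indY y) (obs X Y Z N \<omega>)) / real m"
          unfolding pcheck_def fl nsuc_selY ..
        have "(pmf (q xt z) y - wk (kk z)) * real m < real (nsuc (selY xt z m) (indY y) (obs X Y Z N \<omega>))"
          using gt by (simp add: algebra_simps)
        then have "pmf (q xt z) y - wk (kk z) < pcheck X Y Z N y xt z \<omega>"
          unfolding pc by (simp add: pos_less_divide_eq[OF mpos])
        then show ?thesis by simp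
      qed
      have ph01: "0 \<le> phat Z N z \<omega> \<and> phat Z N z \<omega> \<le> 1" for z
      proof -
        have "card {n \<in> {1..N}. Z n \<omega> = z} \<le> card {1..N}" by (rule card_mono) auto
        then have "real (card {n \<in> {1..N}. Z n \<omega> = z}) \<le> real N" by simp
        then show ?thesis unfolding phat_def using Npos by (simp add: divide_le_eq_1)
      qed
      have per: "pmf (q xt z) y * pmf \<pi> z - phat Z N z \<omega> * pcheck X Y Z N y xt z \<omega> \<le> s + wk (kk z)" for z
        using ph01[of z] hZ[of z] hY[of z] s_nn wk_nn[of "kk z"] kk[of z]
        by (intro main_alg) (auto simp: pmf_le_1)
      have e1: "py y = pmf (q xt False) y * pmf \<pi> False + pmf (q xt True) y * pmf \<pi> True"
        by (simp add: py_def UNIV_bool)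
      have e2: "A = phat Z N False \<omega> * pcheck X Y Z N y xt False \<omega> + phat Z N True \<omega> * pcheck X Y Z N y xt True \<omega>"
        by (simp add: A_def UNIV_bool)
      have "py y \<le> A + 2 * s + (wk (kk False) + wk (kk True))"
        using per[of False] per[of True] unfolding e1 e2 by linarith
      then show False using ineq pyg by linarith
    qed

    have pmf2: "pmf p False + pmf p True = 1" for p :: "bool pmf"
    proof -
      have "(\<Sum>x\<in>UNIV. pmf p x) = 1" by (rule sum_pmf_eq_1) auto
      then show ?thesis by (simp add: UNIV_bool)
    qed
    have pysum: "py True + py False = 1"
    proof -
      have "py True + py False = pmf \<pi> False * (pmf (q xt False) False + pmf (q xt False) True)
          + pmf \<pi> True * (pmf (q xt True) False + pmf (q xt True) True)"
        by (simp add: py_def UNIV_bool algebra_simps)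
      also have "\<dots> = pmf \<pi> False + pmf \<pi> True" by (simp add: pmf2)
      also have "\<dots> = 1" by (rule pmf2)
      finally show ?thesis .
    qed
    obtain y1 where y1: "py y1 \<ge> 1 / 2"
    proof (cases "py True \<ge> 1 / 2")
      case True then show ?thesis using that by blast
    next
      case False then show ?thesis using that[of False] pysum by linarith
    qed
    have py0: "py (\<not> y1) = 1 - py y1" using pysum by (cases y1) auto
    have pyg1: "py y1 > \<delta> / 2" using y1 d1 by linarith
    have [measurable]: "Yt \<in> measurable M (count_space UNIV)" by (rule measY)
    have Yset: "{\<omega> \<in> space M. Yt \<omega> = y0} \<in> sets M" for y0 by measurable
    have Ymeas: "measure M {\<omega> \<in> space M. Yt \<omega> = y0} = py y0" for y0
      unfolding py_def by (rule Ydist)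
    let ?S = "{\<omega> \<in> space M. Yt \<omega> \<notin> Gamma X Y Z N \<delta> xt \<omega>}"
    show ?thesis
    proof (cases "py (\<not> y1) \<le> \<delta> / 2")
      case True
      have sub: "?S \<subseteq> {\<omega> \<in> space M. Yt \<omega> = (\<not> y1)} \<union> Bad y1"
      proof
        fix \<omega> assume "\<omega> \<in> ?S"
        then have \<omega>: "\<omega> \<in> space M" and ng: "Yt \<omega> \<notin> Gamma X Y Z N \<delta> xt \<omega>" by auto
        show "\<omega> \<in> {\<omega> \<in> space M. Yt \<omega> = (\<not> y1)} \<union> Bad y1"
        proof (cases "Yt \<omega> = y1")
          case True
          then have "\<omega> \<in> Bad y1" using det[OF \<omega> _ pyg1] ng by auto
          then show ?thesis by simp
        next
          case False
          then show ?thesis using \<omega> by auto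
        qed
      qed
      have "measure M ?S \<le> measure M ({\<omega> \<in> space M. Yt \<omega> = (\<not> y1)} \<union> Bad y1)"
        using sub Yset Bad_sets by (intro finite_measure_mono) auto
      also have "\<dots> \<le> measure M {\<omega> \<in> space M. Yt \<omega> = (\<not> y1)} + measure M (Bad y1)"
        using Yset Bad_sets by (intro measure_Un_le) auto
      also have "\<dots> \<le> \<delta> / 2 + 11 / 30 * \<delta>"
        using True Bad_bound[of y1] unfolding Ymeas by linarith
      also have "\<dots> \<le> \<delta>" using dpos by simp
      finally show ?thesis .
    next
      case False
      have sub: "?S \<subseteq> Bad (\<not> y1) \<union> Bad y1"
      proof
        fix \<omega> assume "\<omega> \<in> ?S"
        then have \<omega>: "\<omega> \<in> space M" and ng: "Yt \<omega> \<notin> Gamma X Y Z N \<delta> xt \<omega>" by auto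
        have F: "\<not> py (\<not> y1) \<le> \<delta> / 2" by fact
        have "py (Yt \<omega>) > \<delta> / 2"
        proof (cases "Yt \<omega> = y1")
          case True then show ?thesis using pyg1 by simp
        next
          case False then have "Yt \<omega> = (\<not> y1)" by auto
          then show ?thesis using F by simp
        qed
        then have "\<omega> \<in> Bad (Yt \<omega>)" using det[OF \<omega> _] ng by blast
        then show "\<omega> \<in> Bad (\<not> y1) \<union> Bad y1"
        proof (cases "Yt \<omega> = y1")
          case True then show ?thesis using \<open>\<omega> \<in> Bad (Yt \<omega>)\<close> by simp
        next
          case False then have "Yt \<omega> = (\<not> y1)" by auto
          then show ?thesis using \<open>\<omega> \<in> Bad (Yt \<omega>)\<close> by simp
        qed
      qed
      have "measure M ?S \<le> measure M (Bad (\<not> y1) \<union> Bad y1)"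
        using sub Bad_sets by (intro finite_measure_mono) auto
      also have "\<dots> \<le> measure M (Bad (\<not> y1)) + measure M (Bad y1)"
        using Bad_sets by (intro measure_Un_le) auto
      also have "\<dots> \<le> 11 / 30 * \<delta> + 11 / 30 * \<delta>"
        using Bad_bound[of y1] Bad_bound[of "\<not> y1"] by linarith
      also have "\<dots> \<le> \<delta>" using dpos by simp
      finally show ?thesis .
    qed
  qed
qed


end
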